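(* Let $p$ be an odd prime. If $p\equiv 3\pmod 4$, then $g\big(\tfrac{p^2-1}{4},p^2\big)=p-1$. If $p\equiv 1\pmod 4$, then the Waring number $g\big(\tfrac{p^2-1}{4},p^2\big)$ does not exist.
   Context: For a prime power $q$ and a positive integer $k$, the Waring number $g(k,q)$ is the smallest $s$ (if it exists) such that every element of $\mathbb{F}_q$ is a sum of $s$ $k$-th powers of elements of $\mathbb{F}_q$. *)

theory Defs
  imports "HOL-Computational_Algebra.Primes"
begin

definition waring_prop :: "'a::{field,finite} itself \<Rightarrow> nat \<Rightarrow> nat \<Rightarrow> bool" where
  "waring_prop T k s \<longleftrightarrow> (\<forall>x::'a. \<exists>f::nat \<Rightarrow> 'a. x = (\<Sum>i<s. f i ^ k))"

definition waring_number :: "'a::{field,finite} itself \<Rightarrow> nat \<Rightarrow> nat option" where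
  "waring_number T k =
     (if \<exists>s. waring_prop T k s then Some (LEAST s. waring_prop T k s) else None)"

end

theory Submission
  imports Defs "HOL-Number_Theory.Residues" "HOL-Computational_Algebra.Polynomial"
begin

lemma fermat_ff:
  fixes x :: "'a :: {field,finite}"
  shows   "x ^ card (UNIV :: 'a set) = x"
proof (cases "x = 0")
  case False
  have "x * (\<Prod>y\<in>UNIV-{0}. x * y) = x * x ^ (card (UNIV :: 'a set) - 1) * \<Prod>(UNIV-{0})"
    by (simp add: prod.distrib mult_ac)
  also have "x * x ^ (card (UNIV :: 'a set) - 1) = x ^ Suc (card (UNIV :: 'a set) - 1)"
    by (subst power_Suc) auto
  also have "Suc (card (UNIV :: 'a set) - 1) = card (UNIV :: 'a set)"
    using finite_UNIV_card_ge_0[where ?'a = 'a] by simp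
  also have "(\<Prod>y\<in>UNIV-{0}. x * y) = (\<Prod>y\<in>UNIV-{0}. y)"
    by (rule prod.reindex_bij_witness[of _ "\<lambda>y. y / x" "\<lambda>y. x * y"]) (use False in auto)
  finally show ?thesis
    by simp
qed (use finite_UNIV_card_ge_0[where ?'a = 'a] in auto)

lemma char_eq:
  assumes "prime p" "card (UNIV::'a::{field,finite} set) = p^2"
  shows "CHAR('a) = p"
proof -
  have "CHAR('a) > 0" by (simp add: finite_imp_CHAR_pos)
  then have pc: "prime CHAR('a)" by (rule prime_CHAR_semidom)
  have "CHAR('a) dvd p^2" using CHAR_dvd_CARD[where 'a='a] assms(2) by simp
  then have "CHAR('a) dvd p" using pc prime_dvd_power by blast
  then show ?thesis using pc assms(1) primes_dvd_imp_eq by blast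
qed

lemma ofnat_fix:
  assumes "CHAR('a::field) = p" "prime p"
  shows "(of_nat n::'a)^p = of_nat n"
proof (induction n)
  case 0 then show ?case using assms prime_gt_0_nat by simp
next
  case (Suc n)
  have "(of_nat (Suc n)::'a)^p = (of_nat n + 1)^p" by (simp add: add.commute)
  also have "\<dots> = of_nat n ^ p + 1 ^ p" using assms by (intro freshmans_dream) auto
  finally show ?case using Suc by simp
qed

lemma ofint_fix:
  assumes "CHAR('a::field) = p" "prime p"
  shows "(of_int a::'a)^p = of_int a"
proof (cases "a \<ge> 0")
  case True
  then have "(of_int a::'a) = of_nat (nat a)" by simp
  then show ?thesis using ofnat_fix[OF assms] by metis
next
  case False
  then have "(of_int a::'a) = - of_nat (nat (-a))" by simp
  moreover have "(- of_nat (nat (-a)) :: 'a)^p = - (of_nat (nat (-a))^p)"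
    using assms by (intro minus_power_prime_CHAR) auto
  ultimately show ?thesis using ofnat_fix[OF assms] by metis
qed

lemma indep:
  assumes "CHAR('a::field) = p" "prime p" "(i::'a)^p \<noteq> i"
    and "of_int a + of_int b * i = (0::'a)"
  shows "int p dvd a \<and> int p dvd b"
proof (cases "(of_int b::'a) = 0")
  case True
  then have "(of_int a::'a) = 0" using assms(4) by simp
  then show ?thesis using True assms(1) by (simp add: of_int_eq_0_iff_char_dvd)
next
  case False
  then have ie: "i = of_int (-a) / of_int b" using assms(4)
    by (simp add: field_simps add_eq_0_iff2)
  have "i^p = of_int (-a)^p / of_int b ^ p" unfolding ie by (rule power_divide)
  also have "\<dots> = i" unfolding ofint_fix[OF assms(1,2)] ie ..
  finally show ?thesis using assms(3) by simp
qed

lemma card_pow_roots: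
  assumes "n > 0"
  shows "card {x::'a::field. x^n = c} \<le> n"
proof -
  define P where "P = monom (1::'a) n - [:c:]"
  have cP: "coeff P n = 1" using assms by (auto simp: P_def coeff_pCons split: nat.split)
  then have "P \<noteq> 0" by auto
  have "degree P \<le> n" unfolding P_def
    by (rule order.trans[OF degree_diff_le_max]) (auto simp: degree_monom_eq)
  moreover have "{x::'a. x^n = c} = {x. poly P x = 0}" by (auto simp: P_def poly_monom)
  ultimately show ?thesis using card_poly_roots_bound[OF \<open>P \<noteq> 0\<close>] by simp
qed

lemma card_fix_roots:
  assumes "n \<ge> 2"
  shows "card {x::'a::field. x^n = x} \<le> n"
proof -
  define P where "P = monom (1::'a) n - [:0,1:]"
  have cP: "coeff P n = 1" using assms by (auto simp: P_def coeff_pCons split: nat.split)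
  then have "P \<noteq> 0" by auto
  have "degree P \<le> n" unfolding P_def
    by (rule order.trans[OF degree_diff_le_max]) (use assms in \<open>auto simp: degree_monom_eq\<close>)
  moreover have "{x::'a. x^n = x} = {x. poly P x = 0}" by (auto simp: P_def poly_monom)
  ultimately show ?thesis using card_poly_roots_bound[OF \<open>P \<noteq> 0\<close>] by simp
qed

lemma sums_form:
  fixes i :: "'a::field"
  assumes "\<And>y::'a. y^k \<in> {0,1,-1,i,-i}" "i*i = -1"
  shows "\<exists>a b::int. \<bar>a\<bar>+\<bar>b\<bar> \<le> int s \<and> (\<Sum>n<s. f n ^ k) = of_int a + of_int b * i"
proof (induction s)
  case 0 show ?case by (intro exI[of _ 0]) simp
next
  case (Suc s)
  then obtain a b where ab: "\<bar>a\<bar>+\<bar>b\<bar> \<le> int s" "(\<Sum>n<s. f n ^ k) = of_int a + of_int b * i" by blast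
  have "f s ^ k \<in> {0,1,-1,i,-i}" by (rule assms(1))
  then consider "f s ^ k = 0" | "f s ^ k = 1" | "f s ^ k = -1" | "f s ^ k = i" | "f s ^ k = -i" by blast
  then show ?case
  proof cases
    case 1 then show ?thesis using ab by (intro exI[of _ a] exI[of _ b]) auto
  next
    case 2 then show ?thesis using ab by (intro exI[of _ "a+1"] exI[of _ b]) auto
  next
    case 3 then show ?thesis using ab by (intro exI[of _ "a-1"] exI[of _ b]) auto
  next
    case 4 then show ?thesis using ab by (intro exI[of _ a] exI[of _ "b+1"]) (auto simp: algebra_simps)
  next
    case 5 then show ?thesis using ab by (intro exI[of _ a] exI[of _ "b-1"]) (auto simp: algebra_simps)
  qed
qed

lemma reps:
  fixes i u1 u2 u3 u4 :: "'a::field"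
  assumes "u1^k = 1" "u2^k = -1" "u3^k = i" "u4^k = -i" "k > 0"
  shows "\<bar>c\<bar>+\<bar>d\<bar> \<le> int s \<Longrightarrow> \<exists>f. (\<Sum>n<s. f n ^ k) = of_int c + of_int d * i"
proof (induction s arbitrary: c d)
  case 0
  then have "c = 0" "d = 0" by auto
  then show ?case by simp
next
  case (Suc s)
  have shift: "\<exists>f. (\<Sum>n<Suc s. f n ^ k) = of_int c + of_int d * i"
    if h1: "\<bar>c'\<bar>+\<bar>d'\<bar> \<le> int s" and h2: "of_int c + of_int d * i = of_int c' + of_int d' * i + e ^ k" for c' d' and e :: 'a
  proof -
    obtain f where f: "(\<Sum>n<s. f n ^ k) = of_int c' + of_int d' * i" using Suc.IH[OF h1] by blast
    have "(\<Sum>n<s. (f(s:=e)) n ^ k) = (\<Sum>n<s. f n ^ k)" by (intro sum.cong) auto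
    then have "(\<Sum>n<Suc s. (f(s:=e)) n ^ k) = of_int c + of_int d * i" using f h2 by simp
    then show ?thesis by blast
  qed
  consider "c > 0" | "c < 0" | "c = 0" "d > 0" | "c = 0" "d < 0" | "c = 0" "d = 0" by linarith
  then show ?case
  proof cases
    case 1 then show ?thesis using Suc.prems assms by (intro shift[of "c-1" d u1]) auto
  next
    case 2 then show ?thesis using Suc.prems assms by (intro shift[of "c+1" d u2]) auto
  next
    case 3 then show ?thesis using Suc.prems assms by (intro shift[of c "d-1" u3]) (auto simp: algebra_simps)
  next
    case 4 then show ?thesis using Suc.prems assms by (intro shift[of c "d+1" u4]) (auto simp: algebra_simps)
  next
    case 5 then show ?thesis using Suc.prems assms by (intro shift[of 0 0 0]) auto
  qed
qed

lemma abs_bound: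
  fixes a :: int
  assumes "int p dvd (a - int m)" "p = 2*m+1"
  shows "\<bar>a\<bar> \<ge> int m"
proof -
  obtain c where c: "a - int m = int p * c" using assms(1) by (auto elim: dvdE)
  consider "c = 0" | "c \<ge> 1" | "c \<le> -1" by linarith
  then show ?thesis
  proof cases
    case 2 then have "int p * c \<ge> int p * 1" by (intro mult_left_mono) auto
    then show ?thesis using c assms(2) by linarith
  next
    case 3 then have "int p * c \<le> int p * (-1)" by (intro mult_left_mono) auto
    then show ?thesis using c assms(2) by linarith
  qed (use c in auto)
qed

lemma small_dvd:
  fixes x :: int
  assumes "int p dvd x" "\<bar>x\<bar> < int p"
  shows "x = 0"
proof (rule ccontr)
  assume "x \<noteq> 0"
  obtain c where c: "x = int p * c" using assms(1) by (auto elim: dvdE)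
  then have "c \<noteq> 0" using \<open>x \<noteq> 0\<close> by auto
  then have "\<bar>c\<bar> \<ge> 1" by linarith
  then have "int p * \<bar>c\<bar> \<ge> int p * 1" by (intro mult_left_mono) auto
  then show False using assms(2) c by (simp add: abs_mult)
qed

lemma small_rep:
  assumes "CHAR('a::field) = p" "p = 2*m+1" "j < p"
  shows "\<exists>c::int. \<bar>c\<bar> \<le> int m \<and> (of_nat j::'a) = of_int c"
proof (cases "j \<le> m")
  case True then show ?thesis by (intro exI[of _ "int j"]) auto
next
  case False
  have "(of_nat p::'a) = 0" by (metis assms(1) of_nat_CHAR)
  then have "(of_nat j::'a) = of_int (int j - int p)" by simp
  moreover have "\<bar>int j - int p\<bar> \<le> int m" using False assms by linarith
  ultimately show ?thesis by blast
qed

theorem mainTheorem10: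
  fixes p :: nat
  assumes "prime p" and "odd p"
    and "card (UNIV :: 'a set) = p ^ 2"
  shows "(p mod 4 = 3 \<longrightarrow> waring_number TYPE('a::{field,finite}) ((p ^ 2 - 1) div 4) = Some (p - 1))
       \<and> (p mod 4 = 1 \<longrightarrow> waring_number TYPE('a) ((p ^ 2 - 1) div 4) = None)"
proof -
  define q where "q = card (UNIV::'a set)"
  define k where "k = (p^2-1) div 4"
  have ch: "CHAR('a) = p" using char_eq assms(1,3) by blast
  obtain m where pm: "p = 2*m+1" using assms(2) oddE by blast
  have "p \<ge> 2" using assms(1) prime_ge_2_nat by blast
  then have m1: "m \<ge> 1" using pm by linarith
  have psq: "p^2 = 4*(m*m+m) + 1" by (simp add: pm power2_eq_square algebra_simps)
  have k_eq: "k = m*m+m" unfolding k_def psq by simp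
  have q4k: "q = 4*k + 1" using assms(3) psq k_eq q_def by simp
  have kpos: "k > 0" using k_eq m1 by simp
  have fer1: "x^(4*k) = 1" if "x \<noteq> 0" for x::'a
  proof -
    have "x * x^(4*k) = x * 1" using fermat_ff[of x] q4k q_def by simp
    then show ?thesis using that by simp
  qed
  have pow4: "(x^k)^4 = 1" if "x \<noteq> 0" for x::'a
    using fer1[OF that] by (simp add: power_mult[symmetric] mult.commute)
  have zk: "(0::'a)^k = 0" using kpos by simp
  have wp: "waring_prop TYPE('a) k s \<longleftrightarrow> (\<forall>z::'a. \<exists>f::nat \<Rightarrow> 'a. z = (\<Sum>n<s. f n ^ k))" for s
    unfolding waring_prop_def by simp
  show ?thesis
  proof (intro conjI impI)
    assume p3: "p mod 4 = 3"
    then obtain t where pt: "p = 4*t+3" by (metis div_mod_decomp mult.commute)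
    have "\<exists>x::'a. x \<noteq> 0 \<and> x^(2*k) \<noteq> 1"
    proof (rule ccontr)
      assume "\<not> ?thesis"
      then have "UNIV - {0} \<subseteq> {x::'a. x^(2*k) = 1}" by auto
      then have "card (UNIV - {0::'a}) \<le> card {x::'a. x^(2*k) = 1}" by (intro card_mono) auto
      also have "\<dots> \<le> 2*k" using kpos by (intro card_pow_roots) auto
      finally have "q - 1 \<le> 2*k" unfolding q_def by (simp add: card_Diff_singleton)
      then show False using q4k kpos by simp
    qed
    then obtain x::'a where x0: "x \<noteq> 0" and x2: "x^(2*k) \<noteq> 1" by blast
    define i where "i = x^k"
    have i4: "i^4 = 1" using pow4[OF x0] i_def by simp
    have i2: "i^2 \<noteq> 1" using x2 unfolding i_def by (simp add: power_mult[symmetric] mult.commute)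
    have "(i^2 - 1) * (i^2 + 1) = i^4 - 1" by (simp add: algebra_simps eval_nat_numeral)
    then have "(i^2 - 1) * (i^2 + 1) = 0" using i4 by simp
    then have "i^2 + 1 = 0" using i2 by simp
    then have ii: "i * i = -1" by (simp add: power2_eq_square add_eq_0_iff2)
    have ip: "i^p = -i"
    proof -
      have "i^p = (i^4)^t * (i*i) * i" unfolding pt by (simp add: power_add power_mult eval_nat_numeral algebra_simps)
      then show ?thesis using i4 ii by simp
    qed
    have two: "(2::'a) \<noteq> 0"
    proof
      assume "(2::'a) = 0"
      then have "(of_nat 2::'a) = 0" by simp
      then have "p dvd 2" using ch of_nat_eq_0_iff_char_dvd by metis
      then show False using pt by (auto dest: dvd_imp_le)
    qed
    have "i \<noteq> 0" using i4 by auto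
    then have ine: "i^p \<noteq> i" using ip two
      by (metis add_eq_0_iff2 mult_2 mult_eq_0_iff)
    have powset: "y^k \<in> {0,1,-1,i,-i}" for y::'a
    proof (cases "y = 0")
      case True then show ?thesis using zk by simp
    next
      case False
      define z where "z = y^k"
      have z4: "z^4 = 1" using pow4[OF False] z_def by simp
      have "(z-1)*(z+1)*((z-i)*(z+i)) = (z*z-1)*(z*z - i*i)" by (simp add: algebra_simps)
      also have "\<dots> = (z*z-1)*(z*z+1)" using ii by simp
      also have "\<dots> = z^4 - 1" by (simp add: algebra_simps eval_nat_numeral)
      finally have "(z-1)*(z+1)*((z-i)*(z+i)) = 0" using z4 by simp
      then have "z - 1 = 0 \<or> z + 1 = 0 \<or> z - i = 0 \<or> z + i = 0"
        by (simp only: mult_eq_0_iff) blast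
      then have "z = 1 \<or> z = -1 \<or> z = i \<or> z = -i"
        by (metis add_eq_0_iff2 right_minus_eq)
      then show ?thesis unfolding z_def by auto
    qed
    have w1: "(1::'a)^k = 1" by simp
    have "(x^2)^k = i*i" unfolding i_def by (metis power_mult mult.commute power2_eq_square)
    then have w2: "(x^2)^k = -1" using ii by simp
    have "(x^3)^k = i*i*i" unfolding i_def by (metis power_mult mult.commute power3_eq_cube)
    then have w3: "(x^3)^k = -i" using ii by simp
    have w4: "x^k = i" by (simp add: i_def)
    have lower: "\<not> waring_prop TYPE('a) k s" if "s < p - 1" for s
    proof
      assume "waring_prop TYPE('a) k s"
      then obtain f where f: "(of_int (int m) + of_int (int m) * i :: 'a) = (\<Sum>n<s. f n ^ k)"
        unfolding wp by blast
      obtain a b where ab: "\<bar>a\<bar>+\<bar>b\<bar> \<le> int s" "(\<Sum>n<s. f n ^ k) = of_int a + of_int b * i"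
        using sums_form[OF powset ii] by blast
      have "of_int (a - int m) + of_int (b - int m) * i = (0::'a)"
        using f ab(2) by (simp add: algebra_simps)
      then have "int p dvd (a - int m) \<and> int p dvd (b - int m)"
        using indep[OF ch assms(1) ine] by blast
      then have "\<bar>a\<bar> \<ge> int m" "\<bar>b\<bar> \<ge> int m" using abs_bound pm by blast+
      then show False using ab(1) that pm by linarith
    qed
    have cover: "UNIV = (\<lambda>(j,l). (of_nat j + of_nat l * i :: 'a)) ` ({..<p} \<times> {..<p})"
    proof (rule sym, rule card_subset_eq)
      have inj: "inj_on (\<lambda>(j,l). (of_nat j + of_nat l * i :: 'a)) ({..<p} \<times> {..<p})"
      proof (rule inj_onI)
        fix u v
        assume ru: "u \<in> {..<p} \<times> {..<p}" and rv: "v \<in> {..<p} \<times> {..<p}"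
          and e0: "(\<lambda>(j,l). (of_nat j + of_nat l * i :: 'a)) u = (\<lambda>(j,l). (of_nat j + of_nat l * i :: 'a)) v"
        obtain j l where u: "u = (j,l)" by (cases u)
        obtain j' l' where v: "v = (j',l')" by (cases v)
        have r: "j < p" "l < p" "j' < p" "l' < p" using ru rv u v by auto
        have e: "(of_nat j + of_nat l * i :: 'a) = of_nat j' + of_nat l' * i" using e0 u v by simp
        have "of_int (int j - int j') + of_int (int l - int l') * i = (0::'a)"
          using e by (simp add: algebra_simps)
        then have "int p dvd (int j - int j') \<and> int p dvd (int l - int l')"
          using indep[OF ch assms(1) ine] by blast
        moreover have "\<bar>int j - int j'\<bar> < int p" "\<bar>int l - int l'\<bar> < int p" using r by auto
        ultimately have "int j - int j' = 0" "int l - int l' = 0" using small_dvd by blast+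
        then show "u = v" using u v by simp
      qed
      show "card ((\<lambda>(j,l). (of_nat j + of_nat l * i :: 'a)) ` ({..<p} \<times> {..<p})) = card (UNIV::'a set)"
        using card_image[OF inj] assms(3) by (simp add: power2_eq_square)
    qed auto
    have upper: "waring_prop TYPE('a) k (p - 1)"
      unfolding wp
    proof
      fix z :: 'a
      have "z \<in> (\<lambda>(j,l). (of_nat j + of_nat l * i :: 'a)) ` ({..<p} \<times> {..<p})"
        using cover by blast
      then obtain u where u: "u \<in> {..<p} \<times> {..<p}" "z = (\<lambda>(j,l). (of_nat j + of_nat l * i :: 'a)) u"
        by blast
      obtain j l where "u = (j,l)" by (cases u)
      then have jl: "j < p" "l < p" "z = of_nat j + of_nat l * i" using u by auto
      obtain c where c: "\<bar>c\<bar> \<le> int m" "(of_nat j::'a) = of_int c" using small_rep[OF ch pm jl(1)] by blast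
      obtain d where d: "\<bar>d\<bar> \<le> int m" "(of_nat l::'a) = of_int d" using small_rep[OF ch pm jl(2)] by blast
      have "\<bar>c\<bar>+\<bar>d\<bar> \<le> int (p-1)" using c d pm by simp
      then obtain f where "(\<Sum>n<p-1. f n ^ k) = of_int c + of_int d * i"
        using reps[OF w1 w2 w4 w3 kpos] by blast
      then show "\<exists>f::nat \<Rightarrow> 'a. z = (\<Sum>n<p-1. f n ^ k)" using jl c d by metis
    qed
    have "(LEAST s. waring_prop TYPE('a) k s) = p - 1"
    proof (rule Least_equality)
      show "waring_prop TYPE('a) k (p - 1)" by (rule upper)
    next
      fix s assume "waring_prop TYPE('a) k s"
      then show "p - 1 \<le> s" using lower by (meson not_le)
    qed
    then show "waring_number TYPE('a) ((p ^ 2 - 1) div 4) = Some (p - 1)"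
      using upper unfolding waring_number_def k_def by auto
  next
    assume p1: "p mod 4 = 1"
    then obtain t where pt: "p = 4*t+1" by (metis div_mod_decomp mult.commute)
    have inS: "(y^k)^p = y^k" for y::'a
    proof (cases "y = 0")
      case True then show ?thesis using zk pt by simp
    next
      case False
      have "(y^k)^p = ((y^k)^4)^t * y^k" unfolding pt by (simp add: power_add power_mult)
      then show ?thesis using pow4[OF False] by simp
    qed
    have sumS: "(\<Sum>n<s. f n ^ k)^p = (\<Sum>n<s. f n ^ k)" for s and f :: "nat \<Rightarrow> 'a"
    proof -
      have "(\<Sum>n<s. f n ^ k)^p = (\<Sum>n<s. (f n ^ k)^p)"
        using ch assms(1) by (intro freshmans_dream_sum) auto
      then show ?thesis using inS by simp
    qed
    have "card {y::'a. y^p = y} \<le> p" using \<open>p \<ge> 2\<close> by (rule card_fix_roots)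
    moreover have "p < p^2" using \<open>p \<ge> 2\<close> by (simp add: power2_eq_square)
    ultimately have "{y::'a. y^p = y} \<noteq> UNIV" using assms(3) by auto
    then obtain z::'a where "z^p \<noteq> z" by blast
    then have "\<not> waring_prop TYPE('a) k s" for s unfolding wp using sumS by metis
    then show "waring_number TYPE('a) ((p ^ 2 - 1) div 4) = None"
      unfolding waring_number_def k_def by auto
  qed
qed

end
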